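(* Consider a multivariate exponential family of pdfs or pmfs $$f(\boldsymbol{x},\boldsymbol{\theta})=v(\boldsymbol{x})\exp\big(\boldsymbol{\eta}(\boldsymbol{\theta})*\boldsymbol{u}(\boldsymbol{x})-\zeta(\boldsymbol{\theta})\big),\qquad\boldsymbol{\theta}\in\Theta,$$ where $\boldsymbol{x},\boldsymbol{\theta}$ are column vectors, $\boldsymbol{\eta}(\boldsymbol{\theta})$ and $\boldsymbol{u}(\boldsymbol{x})$ are column-vector functions, $\zeta(\boldsymbol{\theta})$ and $v(\boldsymbol{x})$ are scalar functions, $*$ denotes the inner product, and $\boldsymbol{\eta},\zeta$ are differentiable in $\boldsymbol{\theta}$. Let $\boldsymbol{X}_1,\dots,\boldsymbol{X}_n$ be i.i.d. random vectors with common pdf or pmf $f(\cdot,\boldsymbol{\theta})$, and let $\boldsymbol{Z}=\frac1n\sum_{i=1}^n\boldsymbol{u}(\boldsymbol{X}_i)$. For $\boldsymbol{\theta},\boldsymbol{\vartheta}\in\Theta$ and a vector $\boldsymbol{z}$ of the same size as $\boldsymbol{Z}$ define $\rho(\boldsymbol{z},\boldsymbol{\vartheta})=[\boldsymbol{\eta}(\boldsymbol{\theta})-\boldsymbol{\eta}(\boldsymbol{\vartheta})]*\boldsymbol{z}-\zeta(\boldsymbol{\theta})+\zeta(\boldsymbol{\vartheta})$, and let $\mathscr{A}_{\boldsymbol{\theta}}=\{\boldsymbol{\vartheta}\in\Theta:\boldsymbol{\eta}(\boldsymbol{\vartheta})\le\boldsymbol{\eta}(\boldsymbol{\theta})\}$,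 $\mathscr{B}_{\boldsymbol{\theta}}=\{\boldsymbol{\vartheta}\in\Theta:\boldsymbol{\eta}(\boldsymbol{\vartheta})\ge\boldsymbol{\eta}(\boldsymbol{\theta})\}$. Then $$\Pr\{\boldsymbol{Z}\le\boldsymbol{z}\mid\boldsymbol{\theta}\}\le\inf_{\boldsymbol{\vartheta}\in\mathscr{A}_{\boldsymbol{\theta}}}\exp(n\rho(\boldsymbol{z},\boldsymbol{\vartheta}))\Pr\{\boldsymbol{Z}\le\boldsymbol{z}\mid\boldsymbol{\vartheta}\}\le\inf_{\boldsymbol{\vartheta}\in\mathscr{A}_{\boldsymbol{\theta}}}\exp(n\rho(\boldsymbol{z},\boldsymbol{\vartheta})),$$ $$\Pr\{\boldsymbol{Z}\ge\boldsymbol{z}\mid\boldsymbol{\theta}\}\le\inf_{\boldsymbol{\vartheta}\in\mathscr{B}_{\boldsymbol{\theta}}}\exp(n\rho(\boldsymbol{z},\boldsymbol{\vartheta}))\Pr\{\boldsymbol{Z}\ge\boldsymbol{z}\mid\boldsymbol{\vartheta}\}\le\inf_{\boldsymbol{\vartheta}\in\mathscr{B}_{\boldsymbol{\theta}}}\exp(n\rho(\boldsymbol{z},\boldsymbol{\vartheta})).$$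
   Context: $\Pr\{E\mid\boldsymbol{\theta}\}$ denotes the probability of the event $E$ when the $\boldsymbol{X}_i$ are i.i.d. with pdf or pmf $f(\cdot,\boldsymbol{\theta})$. For vectors, $\boldsymbol{V}_1\le\boldsymbol{V}_2$ (resp. $\ge$) means componentwise inequality. *)

theory Defs
  imports "HOL-Probability.Probability"
begin

text \<open>Exponential family density/mass function
  f(x,theta) = v(x) exp(eta(theta) * u(x) - zeta(theta)) with respect to a base measure M
  (Lebesgue measure for a pdf, counting measure for a pmf).\<close>
definition expfam :: "('p \<Rightarrow> real^'k) \<Rightarrow> ('p \<Rightarrow> real) \<Rightarrow> ('x \<Rightarrow> real^'k) \<Rightarrow> ('x \<Rightarrow> real)
    \<Rightarrow> 'x \<Rightarrow> 'p \<Rightarrow> real" where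
  "expfam \<eta> \<zeta> u v x \<theta> = v x * exp (inner (\<eta> \<theta>) (u x) - \<zeta> \<theta>)"

definition sample_law :: "'x measure \<Rightarrow> ('x \<Rightarrow> 'p \<Rightarrow> real) \<Rightarrow> nat \<Rightarrow> 'p \<Rightarrow> (nat \<Rightarrow> 'x) measure" where
  "sample_law M f n \<theta> = PiM {..<n} (\<lambda>_. density M (\<lambda>x. ennreal (f x \<theta>)))"

definition sample_mean :: "nat \<Rightarrow> ('x \<Rightarrow> real^'k) \<Rightarrow> (nat \<Rightarrow> 'x) \<Rightarrow> real^'k" where
  "sample_mean n u xs = (1 / real n) *\<^sub>R (\<Sum>i<n. u (xs i))"

definition rho :: "('p \<Rightarrow> real^'k) \<Rightarrow> ('p \<Rightarrow> real) \<Rightarrow> 'p \<Rightarrow> real^'k \<Rightarrow> 'p \<Rightarrow> real" where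
  "rho \<eta> \<zeta> \<theta> z \<theta>' = inner (\<eta> \<theta> - \<eta> \<theta>') z - \<zeta> \<theta> + \<zeta> \<theta>'"

end

theory Submission
  imports Defs
begin




lemma indic_PiE:
  assumes I: "finite I" and x: "x \<in> space (PiM I (\<lambda>_. N))"
  shows "(\<Prod>i\<in>I. g (x i)) * indicator (Pi\<^sub>E I A) x = (\<Prod>i\<in>I. (g (x i)::ennreal) * indicator (A i) (x i))"
proof -
  have ext: "x \<in> extensional I" using x by (simp add: space_PiM PiE_def)
  have iff: "x \<in> Pi\<^sub>E I A \<longleftrightarrow> (\<forall>i\<in>I. x i \<in> A i)" using ext by (auto simp: PiE_def Pi_def)
  have "indicator (Pi\<^sub>E I A) x = (\<Prod>i\<in>I. indicator (A i) (x i) :: ennreal)"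
  proof (cases "\<forall>i\<in>I. x i \<in> A i")
    case True then show ?thesis using iff by simp
  next
    case False
    then obtain i where "i \<in> I" "x i \<notin> A i" by blast
    then have "(\<Prod>i\<in>I. indicator (A i) (x i) :: ennreal) = 0"
      using I by (intro prod_zero bexI[of _ i]) auto
    then show ?thesis using iff False by simp
  qed
  then show ?thesis by (simp add: prod.distrib)
qed


lemma PiM_density_prob:
  fixes N :: "'a measure" and g :: "'a \<Rightarrow> ennreal" and I :: "'i set"
  assumes N: "prob_space N" and D: "prob_space (density N g)"
    and g: "g \<in> borel_measurable N" and I: "finite I"
  shows "PiM I (\<lambda>_. density N g) = density (PiM I (\<lambda>_. N)) (\<lambda>x. \<Prod>i\<in>I. g (x i))"
proof -
  interpret PN: product_sigma_finite "\<lambda>_. N"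
    unfolding product_sigma_finite_def using N prob_space_imp_sigma_finite by blast
  interpret PD: product_sigma_finite "\<lambda>_. density N g"
    unfolding product_sigma_finite_def using D prob_space_imp_sigma_finite by blast
  show ?thesis
  proof (rule PD.PiM_eqI[OF I, symmetric])
    show "sets (density (Pi\<^sub>M I (\<lambda>_. N)) (\<lambda>x. \<Prod>i\<in>I. g (x i))) = sets (Pi\<^sub>M I (\<lambda>_. density N g))"
      unfolding sets_density by (rule sets_PiM_cong[OF refl]) simp
  next
    fix A assume A: "\<And>i. i \<in> I \<Longrightarrow> A i \<in> sets (density N g)"
    then have A': "\<And>i. i \<in> I \<Longrightarrow> A i \<in> sets N" by simp
    have "emeasure (density (Pi\<^sub>M I (\<lambda>_. N)) (\<lambda>x. \<Prod>i\<in>I. g (x i))) (Pi\<^sub>E I A)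
        = (\<integral>\<^sup>+ x. (\<Prod>i\<in>I. g (x i)) * indicator (Pi\<^sub>E I A) x \<partial>Pi\<^sub>M I (\<lambda>_. N))"
      using A' I g by (subst emeasure_density) (auto intro!: sets_PiM_I_finite)
    also have "\<dots> = (\<integral>\<^sup>+ x. (\<Prod>i\<in>I. g (x i) * indicator (A i) (x i)) \<partial>Pi\<^sub>M I (\<lambda>_. N))"
      using I by (intro nn_integral_cong indic_PiE)
    also have "\<dots> = (\<Prod>i\<in>I. \<integral>\<^sup>+ y. g y * indicator (A i) y \<partial>N)"
      using A' g I by (subst PN.product_nn_integral_prod) auto
    also have "\<dots> = (\<Prod>i\<in>I. emeasure (density N g) (A i))"
      using A' g by (intro prod.cong) (auto simp: emeasure_density)
    finally show "emeasure (density (Pi\<^sub>M I (\<lambda>_. N)) (\<lambda>x. \<Prod>i\<in>I. g (x i))) (Pi\<^sub>E I A)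
        = (\<Prod>i\<in>I. emeasure (density N g) (A i))" .
  qed
qed

lemma expfam_meas:
  fixes M :: "'x measure" and u :: "'x \<Rightarrow> real^'k"
  assumes v_meas: "v \<in> borel_measurable M" and u_meas: "u \<in> borel_measurable M"
  shows "(\<lambda>x. ennreal (expfam \<eta> \<zeta> u v x t)) \<in> borel_measurable M"
  unfolding expfam_def using v_meas u_meas by measurable

lemma expfam_prob:
  fixes M :: "'x measure" and u :: "'x \<Rightarrow> real^'k"
  assumes v_meas: "v \<in> borel_measurable M" and u_meas: "u \<in> borel_measurable M"
    and d: "(\<integral>\<^sup>+ x. ennreal (expfam \<eta> \<zeta> u v x t) \<partial>M) = 1"
  shows "prob_space (density M (\<lambda>x. ennreal (expfam \<eta> \<zeta> u v x t)))"
proof (rule prob_spaceI)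
  show "emeasure (density M (\<lambda>x. ennreal (expfam \<eta> \<zeta> u v x t)))
      (space (density M (\<lambda>x. ennreal (expfam \<eta> \<zeta> u v x t)))) = 1"
  proof -
    have "emeasure (density M (\<lambda>x. ennreal (expfam \<eta> \<zeta> u v x t))) (space M)
       = (\<integral>\<^sup>+ x. ennreal (expfam \<eta> \<zeta> u v x t) * indicator (space M) x \<partial>M)"
      using expfam_meas[OF v_meas u_meas] by (intro emeasure_density) auto
    also have "\<dots> = (\<integral>\<^sup>+ x. ennreal (expfam \<eta> \<zeta> u v x t) \<partial>M)"
      by (intro nn_integral_cong) simp
    finally show ?thesis using d by simp
  qed
qed

lemma inner_vec_mono:
  fixes d Z z :: "real^'k"
  assumes "0 \<le> d" "Z \<le> z" shows "inner d Z \<le> inner d z"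
  using assms unfolding inner_vec_def less_eq_vec_def
  by (intro sum_mono) (auto intro: mult_left_mono)

lemma inner_vec_mono':
  fixes d Z z :: "real^'k"
  assumes "d \<le> 0" "z \<le> Z" shows "inner d Z \<le> inner d z"
  using assms unfolding inner_vec_def less_eq_vec_def
  by (intro sum_mono) (auto intro: mult_left_mono_neg)

lemma core:
  fixes M :: "'x measure" and u :: "'x \<Rightarrow> real^'k" and v :: "'x \<Rightarrow> real"
    and \<eta> :: "'p \<Rightarrow> real^'k" and S :: "real^'k \<Rightarrow> bool"
  assumes n: "n \<ge> 1"
    and v_nonneg: "\<And>x. v x \<ge> 0"
    and v_meas: "v \<in> borel_measurable M"
    and u_meas: "u \<in> borel_measurable M"
    and d1: "(\<integral>\<^sup>+ x. ennreal (expfam \<eta> \<zeta> u v x t) \<partial>M) = 1"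
    and d2: "(\<integral>\<^sup>+ x. ennreal (expfam \<eta> \<zeta> u v x t') \<partial>M) = 1"
    and S: "\<And>Z. S Z \<Longrightarrow> inner (\<eta> t - \<eta> t') Z \<le> inner (\<eta> t - \<eta> t') z"
  shows "measure (sample_law M (expfam \<eta> \<zeta> u v) n t)
                 {xs \<in> space (sample_law M (expfam \<eta> \<zeta> u v) n t). S (sample_mean n u xs)}
     \<le> exp (real n * rho \<eta> \<zeta> t z t') * measure (sample_law M (expfam \<eta> \<zeta> u v) n t')
                 {xs \<in> space (sample_law M (expfam \<eta> \<zeta> u v) n t'). S (sample_mean n u xs)}"
proof -
  define N where "N = density M (\<lambda>x. ennreal (expfam \<eta> \<zeta> u v x t'))"
  define d where "d = \<eta> t - \<eta> t'"
  define c where "c x = inner d (u x) - \<zeta> t + \<zeta> t'" for x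
  define g where "g x = ennreal (exp (c x))" for x
  have Nprob: "prob_space N" unfolding N_def by (rule expfam_prob[OF v_meas u_meas d2])
  have gm: "g \<in> borel_measurable M" unfolding g_def c_def using u_meas by measurable
  have gN: "g \<in> borel_measurable N" using gm unfolding N_def by simp
  have eq1: "density N g = density M (\<lambda>x. ennreal (expfam \<eta> \<zeta> u v x t))"
    unfolding N_def
  proof (subst density_density_eq[OF expfam_meas[OF v_meas u_meas] gm])
    have "ennreal (expfam \<eta> \<zeta> u v x t') * g x = ennreal (expfam \<eta> \<zeta> u v x t)" for x
    proof -
      have "expfam \<eta> \<zeta> u v x t' * exp (c x) = expfam \<eta> \<zeta> u v x t"
        unfolding expfam_def c_def d_def
        by (simp add: mult.assoc exp_add[symmetric] inner_diff_left algebra_simps)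
      moreover have "expfam \<eta> \<zeta> u v x t' \<ge> 0" unfolding expfam_def using v_nonneg by simp
      ultimately show ?thesis unfolding g_def by (metis ennreal_mult exp_ge_zero)
    qed
    then show "density M (\<lambda>x. ennreal (expfam \<eta> \<zeta> u v x t') * g x) =
      density M (\<lambda>x. ennreal (expfam \<eta> \<zeta> u v x t))" by simp
  qed
  have Dprob: "prob_space (density N g)" unfolding eq1 by (rule expfam_prob[OF v_meas u_meas d1])
  define SL where "SL = sample_law M (expfam \<eta> \<zeta> u v) n t"
  define SL' where "SL' = sample_law M (expfam \<eta> \<zeta> u v) n t'"
  define G where "G xs = (\<Prod>i\<in>{..<n}. g (xs i))" for xs
  have SL'N: "SL' = PiM {..<n} (\<lambda>_. N)" unfolding SL'_def sample_law_def N_def ..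
  have SLeq: "SL = density SL' G"
    unfolding SL_def sample_law_def eq1[symmetric] SL'N G_def
    by (rule PiM_density_prob[OF Nprob Dprob gN]) simp
  have SL'prob: "prob_space SL'" unfolding SL'N by (rule prob_space_PiM) (rule Nprob)
  have Gm: "G \<in> borel_measurable SL'" unfolding G_def SL'N using gN by measurable
  define E where "E = {xs \<in> space SL'. S (sample_mean n u xs)}"
  have spE: "{xs \<in> space SL. S (sample_mean n u xs)} = E"
    unfolding E_def SLeq by simp
  define r where "r = rho \<eta> \<zeta> t z t'"
  have Gle: "G xs \<le> ennreal (exp (real n * r))" if "xs \<in> E" for xs
  proof -
    have "G xs = ennreal (\<Prod>i\<in>{..<n}. exp (c (xs i)))"
      unfolding G_def g_def by (rule prod_ennreal) simp
    also have "\<dots> = ennreal (exp (\<Sum>i<n. c (xs i)))" by (simp add: exp_sum)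
    also have "(\<Sum>i<n. c (xs i)) = real n * (inner d (sample_mean n u xs) - \<zeta> t + \<zeta> t')"
      using n unfolding c_def sample_mean_def
      by (simp add: sum_subtractf sum.distrib inner_sum_right algebra_simps)
    also have "\<dots> \<le> real n * r"
      using S[of "sample_mean n u xs"] that unfolding E_def r_def rho_def d_def
      by (intro mult_left_mono) auto
    finally show ?thesis by (simp add: ennreal_leI)
  qed
  show ?thesis
  proof (cases "E \<in> sets SL'")
    case False
    then have "E \<notin> sets SL" unfolding SLeq by simp
    then have "measure SL E = 0" by (rule measure_notin_sets)
    then show ?thesis unfolding SL_def[symmetric] SL'_def[symmetric] spE E_def[symmetric] by simp
  next
    case True
    interpret P': prob_space SL' by (rule SL'prob)
    have "emeasure SL E = (\<integral>\<^sup>+ xs. G xs * indicator E xs \<partial>SL')"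
      unfolding SLeq using True Gm by (simp add: emeasure_density)
    also have "\<dots> \<le> (\<integral>\<^sup>+ xs. ennreal (exp (real n * r)) * indicator E xs \<partial>SL')"
      by (intro nn_integral_mono) (auto simp: indicator_def Gle)
    also have "\<dots> = ennreal (exp (real n * r)) * emeasure SL' E"
      using True by (rule nn_integral_cmult_indicator)
    also have "\<dots> = ennreal (exp (real n * r) * measure SL' E)"
      by (simp add: P'.emeasure_eq_measure ennreal_mult)
    finally have le: "emeasure SL E \<le> ennreal (exp (real n * r) * measure SL' E)" .
    have "emeasure SL E \<noteq> \<top>" using le by (metis ennreal_neq_top neq_top_trans)
    then have "measure SL E \<le> exp (real n * r) * measure SL' E"
      using le by (simp add: measure_def enn2real_leI)
    then show ?thesis unfolding SL_def[symmetric] SL'_def[symmetric] spE E_def r_def .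
  qed
qed


theorem theorem4:
  fixes M :: "(real^'m) measure"
    and \<Theta> :: "(real^'d) set"
    and \<eta> :: "real^'d \<Rightarrow> real^'k" and \<zeta> :: "real^'d \<Rightarrow> real"
    and u :: "real^'m \<Rightarrow> real^'k" and v :: "real^'m \<Rightarrow> real"
    and n :: nat and \<theta> :: "real^'d" and z :: "real^'k"
  assumes n: "n \<ge> 1"
    and v_nonneg: "\<And>x. v x \<ge> 0"
    and v_meas: "v \<in> borel_measurable M"
    and u_meas: "u \<in> borel_measurable M"
    and density: "\<And>\<theta>'. \<theta>' \<in> \<Theta> \<Longrightarrow> (\<integral>\<^sup>+ x. ennreal (expfam \<eta> \<zeta> u v x \<theta>') \<partial>M) = 1"
    and \<eta>_diff: "\<eta> differentiable_on \<Theta>"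
    and \<zeta>_diff: "\<zeta> differentiable_on \<Theta>"
    and \<theta>: "\<theta> \<in> \<Theta>"
  defines "P \<equiv> \<lambda>\<theta>' S. measure (sample_law M (expfam \<eta> \<zeta> u v) n \<theta>')
                 {xs \<in> space (sample_law M (expfam \<eta> \<zeta> u v) n \<theta>'). S (sample_mean n u xs)}"
    and "A \<equiv> {\<theta>' \<in> \<Theta>. \<eta> \<theta>' \<le> \<eta> \<theta>}"
    and "B \<equiv> {\<theta>' \<in> \<Theta>. \<eta> \<theta>' \<ge> \<eta> \<theta>}"
  shows "P \<theta> (\<lambda>Z. Z \<le> z)
           \<le> (INF \<theta>' \<in>A. exp (real n * rho \<eta> \<zeta> \<theta> z \<theta>') * P \<theta>' (\<lambda>Z. Z \<le> z))
       \<and> (INF \<theta>' \<in>A. exp (real n * rho \<eta> \<zeta> \<theta> z \<theta>') * P \<theta>' (\<lambda>Z. Z \<le> z))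
           \<le> (INF \<theta>' \<in>A. exp (real n * rho \<eta> \<zeta> \<theta> z \<theta>'))
       \<and> P \<theta> (\<lambda>Z. Z \<ge> z)
           \<le> (INF \<theta>' \<in>B. exp (real n * rho \<eta> \<zeta> \<theta> z \<theta>') * P \<theta>' (\<lambda>Z. Z \<ge> z))
       \<and> (INF \<theta>' \<in>B. exp (real n * rho \<eta> \<zeta> \<theta> z \<theta>') * P \<theta>' (\<lambda>Z. Z \<ge> z))
           \<le> (INF \<theta>' \<in>B. exp (real n * rho \<eta> \<zeta> \<theta> z \<theta>'))"
  proof -
  have An: "A \<noteq> {}" using \<theta> unfolding A_def by auto
  have Bn: "B \<noteq> {}" using \<theta> unfolding B_def by auto
  have P01: "0 \<le> P t S \<and> P t S \<le> 1" if "t \<in> \<Theta>" for t S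
  proof -
    have "prob_space (sample_law M (expfam \<eta> \<zeta> u v) n t)"
      unfolding sample_law_def
      by (rule prob_space_PiM, rule expfam_prob[OF v_meas u_meas density[OF that]])
    then show ?thesis unfolding P_def by (simp add: prob_space.prob_le_1)
  qed
  have coreA: "P \<theta> (\<lambda>Z. Z \<le> z) \<le> exp (real n * rho \<eta> \<zeta> \<theta> z t) * P t (\<lambda>Z. Z \<le> z)"
    if "t \<in> A" for t
    unfolding P_def
    using that unfolding A_def
    by (intro core[OF n v_nonneg v_meas u_meas density[OF \<theta>]])
       (auto intro!: density inner_vec_mono)
  have coreB: "P \<theta> (\<lambda>Z. Z \<ge> z) \<le> exp (real n * rho \<eta> \<zeta> \<theta> z t) * P t (\<lambda>Z. Z \<ge> z)"
    if "t \<in> B" for t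
    unfolding P_def
    using that unfolding B_def
    by (intro core[OF n v_nonneg v_meas u_meas density[OF \<theta>]])
       (auto intro!: density inner_vec_mono')
  have bdA: "bdd_below ((\<lambda>t. exp (real n * rho \<eta> \<zeta> \<theta> z t) * P t S) ` A)" for S
    using P01 unfolding A_def by (intro bdd_belowI[of _ 0]) auto
  have bdB: "bdd_below ((\<lambda>t. exp (real n * rho \<eta> \<zeta> \<theta> z t) * P t S) ` B)" for S
    using P01 unfolding B_def by (intro bdd_belowI[of _ 0]) auto
  have leA: "exp (real n * rho \<eta> \<zeta> \<theta> z t) * P t S \<le> exp (real n * rho \<eta> \<zeta> \<theta> z t)"
    if "t \<in> \<Theta>" for t S
    using P01[OF that, of S] by (simp add: mult_left_le)
  show ?thesis
  proof (intro conjI)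
    show "P \<theta> (\<lambda>Z. Z \<le> z) \<le> (INF t\<in>A. exp (real n * rho \<eta> \<zeta> \<theta> z t) * P t (\<lambda>Z. Z \<le> z))"
      using An coreA by (intro cINF_greatest) auto
    show "P \<theta> (\<lambda>Z. Z \<ge> z) \<le> (INF t\<in>B. exp (real n * rho \<eta> \<zeta> \<theta> z t) * P t (\<lambda>Z. Z \<ge> z))"
      using Bn coreB by (intro cINF_greatest) auto
    show "(INF t\<in>A. exp (real n * rho \<eta> \<zeta> \<theta> z t) * P t (\<lambda>Z. Z \<le> z))
        \<le> (INF t\<in>A. exp (real n * rho \<eta> \<zeta> \<theta> z t))"
    proof (rule cINF_mono[OF An bdA])
      fix m assume m: "m \<in> A"
      then have "m \<in> \<Theta>" unfolding A_def by simp
      then show "\<exists>t\<in>A. exp (real n * rho \<eta> \<zeta> \<theta> z t) * P t (\<lambda>Z. Z \<le> z) \<le> exp (real n * rho \<eta> \<zeta> \<theta> z m)"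
        using m leA by blast
    qed
    show "(INF t\<in>B. exp (real n * rho \<eta> \<zeta> \<theta> z t) * P t (\<lambda>Z. Z \<ge> z))
        \<le> (INF t\<in>B. exp (real n * rho \<eta> \<zeta> \<theta> z t))"
    proof (rule cINF_mono[OF Bn bdB])
      fix m assume m: "m \<in> B"
      then have "m \<in> \<Theta>" unfolding B_def by simp
      then show "\<exists>t\<in>B. exp (real n * rho \<eta> \<zeta> \<theta> z t) * P t (\<lambda>Z. Z \<ge> z) \<le> exp (real n * rho \<eta> \<zeta> \<theta> z m)"
        using m leA by blast
    qed
  qed
qed

end
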